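(* (i) For every $n\in\mathbb{N}$ and $a\in\mathbb{C}\setminus\mathbb{Z}^-$, \[ \sum_{j=0}^{n}\sum_{i=0}^{j}\frac{\binom{n+a+1}{i}}{\binom{n+a}{j}}(-1)^i=\frac{(-1)^n+1}{2}. \] (ii) For every $n\in\mathbb{N}$, \[ \sum_{j=0}^{n}\sum_{i=0}^{j}\frac{\binom{n+2}{i}}{\binom{n}{j}}(-1)^{n-i}=(n+1)\Big(H_{n+1}-H_{\lfloor\frac{n+1}{2}\rfloor}\Big). \]
   Context: For $x\in\mathbb{C}$, $i\in\mathbb{N}$: $\binom{x}{i}=x(x-1)\cdots(x-i+1)/i!$. $\mathbb{Z}^-=\{-1,-2,\dots\}$. $H_n=\sum_{k=1}^{n}\frac1k$ is the $n$-th harmonic number ($H_0=0$). *)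

theory Defs
  imports "HOL-Analysis.Analysis"
begin

end

theory Submission
  imports Defs
begin

lemma altsum_g: "(\<Sum>i=0..j. (-1)^i * ((y + 1) gchoose i)) = (-1)^j * (y gchoose j :: 'a::field_char_0)"
proof (induction j)
  case 0 then show ?case by simp
next
  case (Suc j)
  have "(\<Sum>i=0..Suc j. (-1)^i * ((y + 1) gchoose i)) = (-1)^j * (y gchoose j) + (-1)^Suc j * ((y+1) gchoose Suc j)"
    using Suc by simp
  also have "\<dots> = (-1)^Suc j * (y gchoose Suc j)"
    by (simp only: gbinomial_Suc_Suc) (simp add: algebra_simps)
  finally show ?case .
qed

lemma altsum_n: "(\<Sum>i=0..j. (-1)^i * real ((m + 1) choose i)) = (-1)^j * real (m choose j)"
  using altsum_g[where j=j and y="real m"] by (simp add: binomial_gbinomial add.commute)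

lemma gchoose_nz:
  fixes x :: complex
  assumes "\<forall>k::nat. k < n \<longrightarrow> x \<noteq> of_nat k" "j \<le> n"
  shows "x gchoose j \<noteq> 0"
proof
  assume "x gchoose j = 0"
  hence "pochhammer (-x) j = 0" by (simp add: gbinomial_pochhammer)
  then obtain k where "k < j" "-x = - of_nat k" by (auto simp: pochhammer_eq_0_iff)
  with assms show False by auto
qed

lemma signsum: "(\<Sum>j=0..n. (-1::complex)^j) = ((-1)^n + 1) / 2"
  by (induction n) (auto simp: field_simps)

lemma part1:
  fixes a :: complex
  assumes "a \<notin> {z. \<exists>k::nat. k \<ge> 1 \<and> z = - of_nat k}"
  shows "(\<Sum>j=0..n. \<Sum>i=0..j. ((of_nat n + a + 1) gchoose i) / ((of_nat n + a) gchoose j) * (-1)^i)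
              = ((-1)^n + 1) / 2"
proof -
  have nz: "(of_nat n + a) gchoose j \<noteq> 0" if "j \<le> n" for j
  proof (rule gchoose_nz[OF _ that], intro allI impI)
    fix k assume k: "k < n"
    show "of_nat n + a \<noteq> of_nat k"
    proof
      assume "of_nat n + a = of_nat k"
      hence "a = - of_nat (n - k)" using k by (simp add: of_nat_diff algebra_simps)
      moreover have "n - k \<ge> 1" using k by simp
      ultimately show False using assms by blast
    qed
  qed
  have "(\<Sum>i=0..j. ((of_nat n + a + 1) gchoose i) / ((of_nat n + a) gchoose j) * (-1)^i) = (-1)^j"
    if "j \<in> {0..n}" for j
  proof -
    have "(\<Sum>i=0..j. ((of_nat n + a + 1) gchoose i) / ((of_nat n + a) gchoose j) * (-1)^i)
       = (\<Sum>i=0..j. (-1)^i * ((of_nat n + a + 1) gchoose i)) / ((of_nat n + a) gchoose j)"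
      by (simp add: sum_divide_distrib mult.commute)
    also have "\<dots> = (-1)^j" using altsum_g[where j=j and y="of_nat n + a"] nz[of j] that by simp
    finally show ?thesis .
  qed
  hence "(\<Sum>j=0..n. \<Sum>i=0..j. ((of_nat n + a + 1) gchoose i) / ((of_nat n + a) gchoose j) * (-1)^i)
     = (\<Sum>j=0..n. (-1::complex)^j)" by (rule sum.cong[OF refl])
  then show ?thesis using signsum by simp
qed

definition S :: "nat \<Rightarrow> real" where "S n = (\<Sum>j=0..n. (-1)^(n+j) / real (n + 1 - j))"

lemma S_Suc: "S (Suc n) = S n + (-1)^(Suc n) / real (n + 2)"
proof -
  have "S (Suc n) = (-1)^(Suc n) / real (n+2) + (\<Sum>j=0..n. (-1)^(Suc n + Suc j) / real (Suc n + 1 - Suc j))"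
    unfolding S_def by (subst sum.atLeast0_atMost_Suc_shift) simp
  also have "(\<Sum>j=0..n. (-1)^(Suc n + Suc j) / real (Suc n + 1 - Suc j)) = S n"
    unfolding S_def by (intro sum.cong) auto
  finally show ?thesis by simp
qed

lemma S_harm: "S n = harm (n + 1) - harm ((n + 1) div 2)"
proof (induction n)
  case 0 then show ?case by (simp add: S_def harm_expand)
next
  case (Suc n)
  show ?case
  proof (cases "even n")
    case True
    define m where "m = (n+1) div 2"
    have d: "(Suc n + 1) div 2 = Suc m" using True unfolding m_def by presburger
    have r: "real (n+2) = 2 * real (Suc m)" proof -
      have "n + 2 = 2 * Suc m" using True unfolding m_def by presburger
      then show ?thesis by (metis of_nat_mult of_nat_numeral)
    qed
    have "S (Suc n) = harm (n+1) - harm m - 1 / real (n+2)"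
      using Suc True by (simp add: S_Suc m_def)
    also have "\<dots> = harm (Suc n + 1) - harm (Suc m)"
    proof -
      have h1: "harm (Suc n + 1) = harm (n+1) + 1 / real (n+2)" by (simp add: harm_Suc inverse_eq_divide)
      have h2: "harm (Suc m) = harm m + 2 * (1 / real (n+2))" using r by (simp add: harm_Suc inverse_eq_divide field_simps)
      show ?thesis unfolding h1 h2 by (simp only: algebra_simps)
    qed
    finally show ?thesis using d by simp
  next
    case False
    have d: "(Suc n + 1) div 2 = (n+1) div 2" using False by presburger
    have "S (Suc n) = harm (n+1) - harm ((n+1) div 2) + 1 / real (n+2)"
      using Suc False by (simp add: S_Suc)
    moreover have h1: "harm (Suc n + 1) = harm (n+1) + 1 / real (n+2)" by (simp add: harm_Suc inverse_eq_divide)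
    ultimately show ?thesis unfolding d h1 by (simp only: algebra_simps)
  qed
qed

lemma part2:
  "(\<Sum>j=0..n. \<Sum>i=0..j. real ((n + 2) choose i) / real (n choose j) * (-1)^(n - i))
              = real (n + 1) * (harm (n + 1) - harm ((n + 1) div 2))"
proof -
  have "(\<Sum>i=0..j. real ((n + 2) choose i) / real (n choose j) * (-1)^(n - i))
        = real (n+1) * ((-1)^(n+j) / real (n + 1 - j))" if "j \<in> {0..n}" for j
  proof -
    have jn: "j \<le> n" using that by simp
    have pw: "(-1::real)^(n - i) = (-1)^n * (-1)^i" if "i \<le> n" for i
    proof -
      have "(-1::real)^n = (-1)^(n-i) * (-1)^i" using that by (simp flip: power_add)
      hence "(-1::real)^n * (-1)^i = (-1)^(n-i) * ((-1)^i * (-1)^i)" by simp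
      also have "(-1::real)^i * (-1)^i = 1" by (simp flip: power_add)
      finally show ?thesis by simp
    qed
    have "(\<Sum>i=0..j. real ((n + 2) choose i) / real (n choose j) * (-1)^(n - i))
        = (-1)^n / real (n choose j) * (\<Sum>i=0..j. (-1)^i * real ((n + 1 + 1) choose i))"
      by (simp add: sum_distrib_left pw jn) (intro sum.cong, auto simp: pw)
    also have "\<dots> = (-1)^n / real (n choose j) * ((-1)^j * real ((n+1) choose j))"
      by (simp only: altsum_n)
    also have "real (n + 1 - j) * real ((n+1) choose j) = real (n+1) * real (n choose j)"
    proof -
      have h: "(n+1-j)*((n+1) choose j) = (n+1)*(n choose j)" using binomial_absorb_comp[of "n+1" j] by simp
      show ?thesis by (metis h of_nat_mult)
    qed
    hence "real ((n+1) choose j) = real (n+1) * real (n choose j) / real (n + 1 - j)"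
      using jn by (simp add: field_simps)
    hence "(-1)^n / real (n choose j) * ((-1)^j * real ((n+1) choose j))
          = real (n+1) * ((-1)^(n+j) / real (n + 1 - j))"
      using jn by (simp add: power_add field_simps)
    finally show ?thesis .
  qed
  hence "(\<Sum>j=0..n. \<Sum>i=0..j. real ((n + 2) choose i) / real (n choose j) * (-1)^(n - i))
        = (\<Sum>j=0..n. real (n+1) * ((-1)^(n+j) / real (n + 1 - j)))" by (rule sum.cong[OF refl])
  also have "\<dots> = real (n+1) * S n" by (simp add: S_def sum_distrib_left)
  finally show ?thesis by (simp add: S_harm)
qed

theorem mainTheorem12:
  shows "(\<forall>(n::nat) (a::complex). a \<notin> {z. \<exists>k::nat. k \<ge> 1 \<and> z = - of_nat k} \<longrightarrow>
            (\<Sum>j=0..n. \<Sum>i=0..j. ((of_nat n + a + 1) gchoose i) / ((of_nat n + a) gchoose j) * (-1)^i)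
              = ((-1)^n + 1) / 2)
       \<and> (\<forall>n::nat.
            (\<Sum>j=0..n. \<Sum>i=0..j. real ((n + 2) choose i) / real (n choose j) * (-1)^(n - i))
              = real (n + 1) * (harm (n + 1) - harm ((n + 1) div 2)))"
  using part1 part2 by blast

end
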